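(* Any data structure for $n$-vertex directed graphs that decides, for any query set $F$ of at most $2f$ failing edges with $2f = O(\log n)$, whether the fault-tolerant diameter $\mathrm{diam}(G-F)$ is finite requires $\Omega(2^f n)$ bits of space.
   Context: $G-F$ is $G$ with the edges of $F$ removed and $\mathrm{diam}(H)=\max_{s,t} d_H(s,t)$, the maximum shortest-path distance over ordered vertex pairs; it is finite iff $H$ is strongly connected. *)

theory Defs
  imports Main "HOL-Library.Extended_Nat"
begin

definition digraphs :: "nat \<Rightarrow> (nat \<times> nat) set set" where
  "digraphs n = {E. E \<subseteq> {(u,v). u < n \<and> v < n \<and> u \<noteq> v}}"

definition sp_dist :: "(nat \<times> nat) set \<Rightarrow> nat \<Rightarrow> nat \<Rightarrow> enat" where
  "sp_dist E s t = (INF k \<in> {k. (s,t) \<in> E ^^ k}. enat k)"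

definition diam :: "nat \<Rightarrow> (nat \<times> nat) set \<Rightarrow> enat" where
  "diam n E = (SUP s \<in> {0..<n}. SUP t \<in> {0..<n}. sp_dist E s t)"

end

theory Submission
  imports Defs
begin

definition t1 :: "nat \<Rightarrow> nat \<Rightarrow> nat \<Rightarrow> nat" where "t1 d g a = g * (4 * 2^d) + a"
definition t2 :: "nat \<Rightarrow> nat \<Rightarrow> nat \<Rightarrow> nat" where "t2 d g a = g * (4 * 2^d) + (2 * 2^d + a)"
definition tnode :: "nat \<Rightarrow> nat \<Rightarrow> bool" where "tnode d a \<longleftrightarrow> 1 \<le> a \<and> a < 2 * 2^d"
definition child :: "nat \<Rightarrow> nat \<Rightarrow> nat \<Rightarrow> bool" where
  "child d a b \<longleftrightarrow> tnode d a \<and> tnode d b \<and> (b = 2*a \<or> b = 2*a+1)"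
definition leaf :: "nat \<Rightarrow> nat \<Rightarrow> bool" where "leaf d x \<longleftrightarrow> 2^d \<le> x \<and> x < 2 * 2^d"
definition anc :: "nat \<Rightarrow> nat \<Rightarrow> bool" where "anc l a \<longleftrightarrow> 1 \<le> a \<and> (\<exists>k. a = l div 2^k)"

lemma blk_eq:
  fixes B :: nat
  assumes "x < B" "y < B"
  shows "(g * B + x = h * B + y) \<longleftrightarrow> (g = h \<and> x = y)"
proof
  assume e: "g * B + x = h * B + y"
  have "(g * B + x) div B = g" "(h * B + y) div B = h" using assms by auto
  then have "g = h" using e by simp
  then show "g = h \<and> x = y" using e by simp
qed simp

lemma t1_eq[simp]: "a < 2*2^d \<Longrightarrow> b < 2*2^d \<Longrightarrow> t1 d g a = t1 d h b \<longleftrightarrow> g = h \<and> a = b"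
  unfolding t1_def by (rule blk_eq) auto
lemma t2_eq[simp]: "a < 2*2^d \<Longrightarrow> b < 2*2^d \<Longrightarrow> t2 d g a = t2 d h b \<longleftrightarrow> g = h \<and> a = b"
  unfolding t2_def by (subst blk_eq) auto
lemma t12_neq[simp]: "a < 2*2^d \<Longrightarrow> b < 2*2^d \<Longrightarrow> t1 d g a \<noteq> t2 d h b"
  unfolding t1_def t2_def by (subst blk_eq) auto
lemma t21_neq[simp]: "a < 2*2^d \<Longrightarrow> b < 2*2^d \<Longrightarrow> t2 d h b \<noteq> t1 d g a"
  using t12_neq by metis

lemma div_pow_le_half: "k \<ge> 1 \<Longrightarrow> (l::nat) div 2^k \<le> l div 2"
proof -
  assume "k \<ge> 1"
  then have "(2::nat) \<le> 2^k" by (metis power_increasing power_one_right zero_less_numeral one_le_numeral)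
  then show ?thesis by (simp add: div_le_mono2)
qed

lemma leaf_anc: "leaf d l \<Longrightarrow> leaf d a \<Longrightarrow> anc l a \<Longrightarrow> a = l"
proof -
  assume l: "leaf d l" and a: "leaf d a" and "anc l a"
  then obtain k where k: "a = l div 2^k" unfolding anc_def by auto
  show "a = l"
  proof (cases k)
    case 0 then show ?thesis using k by simp
  next
    case (Suc j)
    have "l div 2^k \<le> l div 2" by (rule div_pow_le_half) (simp add: Suc)
    also have "l div 2 < 2^d" using l unfolding leaf_def by auto
    finally show ?thesis using a k unfolding leaf_def by simp
  qed
qed

lemma anc_tnode: "leaf d l \<Longrightarrow> anc l a \<Longrightarrow> tnode d a"
  unfolding anc_def leaf_def tnode_def using div_le_dividend le_less_trans by blast

lemma leaf_div_d: "leaf d l \<Longrightarrow> l div 2^d = 1"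
  unfolding leaf_def by (intro div_nat_eqI) auto

lemma anc_root: "leaf d l \<Longrightarrow> anc l 1"
  unfolding anc_def using leaf_div_d[of d l] by (metis order_refl)

lemma leaf_div_pos: "leaf d l \<Longrightarrow> j \<le> d \<Longrightarrow> 1 \<le> l div 2^j"
proof -
  assume "leaf d l" "j \<le> d"
  then have "2^j \<le> l" unfolding leaf_def by (meson le_trans one_le_numeral power_increasing)
  then show ?thesis by (simp add: div_greater_zero_iff Suc_le_eq)
qed

lemma anc_div: "leaf d l \<Longrightarrow> j \<le> d \<Longrightarrow> anc l (l div 2^j)"
  unfolding anc_def using leaf_div_pos by blast

lemma half_cases: "(x::nat) div 2 = y \<Longrightarrow> x = 2*y \<or> x = 2*y+1" by presburger

lemma anc_step: "leaf d l \<Longrightarrow> j < d \<Longrightarrow> child d (l div 2^(Suc j)) (l div 2^j)"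
proof -
  assume l: "leaf d l" and j: "j < d"
  have "anc l (l div 2^(Suc j))" "anc l (l div 2^j)"
    by (intro anc_div[OF l]; use j in simp)+
  then have a: "tnode d (l div 2^(Suc j))" "tnode d (l div 2^j)"
    using anc_tnode[OF l] by blast+
  have "l div 2^(Suc j) = (l div 2^j) div 2" by (simp only: power_Suc2 div_mult2_eq)
  then have "l div 2^j = 2 * (l div 2^(Suc j)) \<or> l div 2^j = 2 * (l div 2^(Suc j)) + 1" using half_cases by metis
  then show ?thesis using a unfolding child_def by blast
qed

definition sib :: "nat \<Rightarrow> nat" where "sib c = (if even c then c + 1 else c - 1)"

lemma F_char:
  assumes l: "leaf d l" and ab: "child d a b" and aa: "anc l a" and nb: "\<not> anc l b"
  shows "\<exists>k<d. a = l div 2^(Suc k) \<and> b = sib (l div 2^k)"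
proof -
  obtain j where j: "a = l div 2^j" using aa unfolding anc_def by auto
  have a1: "1 \<le> a" "a < 2^d" using ab unfolding child_def tnode_def by auto
  have "j \<noteq> 0"
  proof
    assume "j = 0" then have "a = l" using j by simp
    then show False using a1 l unfolding leaf_def by simp
  qed
  then obtain k where k: "j = Suc k" by (cases j) auto
  have "k < d"
  proof (rule ccontr)
    assume "\<not> k < d"
    then have "2 * 2^d \<le> (2::nat)^j" using k by (simp add: power_increasing)
    then have "l < 2^j" using l unfolding leaf_def by simp
    then show False using j a1 by simp
  qed
  define c where "c = l div 2^k"
  have "c div 2 = a" unfolding c_def j k by (simp only: power_Suc2 div_mult2_eq)
  then have c2: "c = 2*a \<or> c = 2*a+1" by (rule half_cases)
  have "anc l c" unfolding anc_def c_def using a1 c2 c_def by auto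
  then have "b \<noteq> c" using nb by auto
  then have "b = sib c" using ab c2 unfolding child_def sib_def by auto
  then show ?thesis using \<open>k < d\<close> j k c_def by blast
qed


definition KK :: "nat \<Rightarrow> nat \<Rightarrow> nat" where "KK n d = n div (4 * 2^d)"
definition gof :: "nat \<Rightarrow> nat \<Rightarrow> nat \<Rightarrow> nat" where "gof n d v = min (v div (4 * 2^d)) (KK n d - 1)"

definition base :: "nat \<Rightarrow> nat \<Rightarrow> (nat \<times> nat) set" where
  "base n d = {(t1 d g a, t1 d g b) | g a b. g < KK n d \<and> child d a b}
    \<union> {(t2 d g b, t2 d g a) | g a b. g < KK n d \<and> child d a b}
    \<union> {(v, t1 d (gof n d v) 1) | v. v < n \<and> v \<noteq> t1 d (gof n d v) 1}
    \<union> {(t2 d (gof n d v) 1, v) | v. v < n \<and> v \<noteq> t2 d (gof n d v) 1}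
    \<union> {(t2 d g 1, t1 d (Suc g mod KK n d) 1) | g. g < KK n d}"

definition mid :: "nat \<Rightarrow> nat \<Rightarrow> (nat \<times> nat \<times> nat) set \<Rightarrow> (nat \<times> nat) set" where
  "mid n d M = {(t1 d g l, t2 d g m) | g l m. (g,l,m) \<in> M \<and> g < KK n d \<and> leaf d l \<and> leaf d m}"

definition GG :: "nat \<Rightarrow> nat \<Rightarrow> (nat \<times> nat \<times> nat) set \<Rightarrow> (nat \<times> nat) set" where
  "GG n d M = base n d \<union> mid n d M"

definition Fq :: "nat \<Rightarrow> nat \<Rightarrow> nat \<Rightarrow> nat \<Rightarrow> (nat \<times> nat) set" where
  "Fq d g l m = {(t1 d g a, t1 d g b) | a b. child d a b \<and> anc l a \<and> \<not> anc l b}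
     \<union> {(t2 d g b, t2 d g a) | a b. child d a b \<and> anc m a \<and> \<not> anc m b}"

lemma child_bounds: "child d a b \<Longrightarrow> 1 \<le> a \<and> a < 2*2^d \<and> 2 \<le> b \<and> b < 2*2^d \<and> a \<noteq> b"
  unfolding child_def tnode_def by auto

lemma Fq_sub: "g < KK n d \<Longrightarrow> Fq d g l m \<subseteq> base n d"
  unfolding Fq_def base_def by blast

lemma Fq_edges: "(x,y) \<in> Fq d g l m \<Longrightarrow>
  (\<exists>a b. child d a b \<and> x = t1 d g a \<and> y = t1 d g b) \<or> (\<exists>a b. child d a b \<and> x = t2 d g b \<and> y = t2 d g a)"
  unfolding Fq_def by blast

lemma Fq_not_into_r1: "(x, t1 d h 1) \<notin> Fq d g l m"
proof
  assume "(x, t1 d h 1) \<in> Fq d g l m"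
  from Fq_edges[OF this] show False
  proof
    assume "\<exists>a b. child d a b \<and> x = t1 d g a \<and> t1 d h 1 = t1 d g b"
    then obtain a b where "child d a b" "t1 d h 1 = t1 d g b" by blast
    then show False using child_bounds[of d a b] by (simp add: t1_eq)
  next
    assume "\<exists>a b. child d a b \<and> x = t2 d g b \<and> t1 d h 1 = t2 d g a"
    then obtain a b where "child d a b" "t1 d h 1 = t2 d g a" by blast
    then show False using child_bounds[of d a b] by simp
  qed
qed

lemma Fq_not_from_r2: "(t2 d h 1, y) \<notin> Fq d g l m"
proof
  assume "(t2 d h 1, y) \<in> Fq d g l m"
  from Fq_edges[OF this] show False
  proof
    assume "\<exists>a b. child d a b \<and> t2 d h 1 = t1 d g a \<and> y = t1 d g b"
    then obtain a b where "child d a b" "t2 d h 1 = t1 d g a" by blast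
    then show False using child_bounds[of d a b] by simp
  next
    assume "\<exists>a b. child d a b \<and> t2 d h 1 = t2 d g b \<and> y = t2 d g a"
    then obtain a b where "child d a b" "t2 d h 1 = t2 d g b" by blast
    then show False using child_bounds[of d a b] by (simp add: t2_eq)
  qed
qed

lemma Fq_card:
  assumes l: "leaf d l" and m: "leaf d m"
  shows "card (Fq d g l m) \<le> 2 * d"
proof -
  define A where "A = {(t1 d g a, t1 d g b) | a b. child d a b \<and> anc l a \<and> \<not> anc l b}"
  define B where "B = {(t2 d g b, t2 d g a) | a b. child d a b \<and> anc m a \<and> \<not> anc m b}"
  have A: "A \<subseteq> (\<lambda>k. (t1 d g (l div 2^(Suc k)), t1 d g (sib (l div 2^k)))) ` {..<d}"
  proof
    fix e assume "e \<in> A"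
    then obtain a b where e: "e = (t1 d g a, t1 d g b)" and ab: "child d a b" "anc l a" "\<not> anc l b"
      unfolding A_def by blast
    from F_char[OF l ab] obtain k where "k < d" "a = l div 2^(Suc k)" "b = sib (l div 2^k)" by blast
    then show "e \<in> (\<lambda>k. (t1 d g (l div 2^(Suc k)), t1 d g (sib (l div 2^k)))) ` {..<d}"
      using e by blast
  qed
  have B: "B \<subseteq> (\<lambda>k. (t2 d g (sib (m div 2^k)), t2 d g (m div 2^(Suc k)))) ` {..<d}"
  proof
    fix e assume "e \<in> B"
    then obtain a b where e: "e = (t2 d g b, t2 d g a)" and ab: "child d a b" "anc m a" "\<not> anc m b"
      unfolding B_def by blast
    from F_char[OF m ab] obtain k where "k < d" "a = m div 2^(Suc k)" "b = sib (m div 2^k)" by blast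
    then show "e \<in> (\<lambda>k. (t2 d g (sib (m div 2^k)), t2 d g (m div 2^(Suc k)))) ` {..<d}"
      using e by blast
  qed
  have "card A \<le> card ((\<lambda>k. (t1 d g (l div 2^(Suc k)), t1 d g (sib (l div 2^k)))) ` {..<d})"
    by (rule card_mono[OF _ A]) simp
  also have "\<dots> \<le> d" using card_image_le[of "{..<d}"] by (metis card_lessThan finite_lessThan)
  finally have cA: "card A \<le> d" .
  have "card B \<le> card ((\<lambda>k. (t2 d g (sib (m div 2^k)), t2 d g (m div 2^(Suc k)))) ` {..<d})"
    by (rule card_mono[OF _ B]) simp
  also have "\<dots> \<le> d" using card_image_le[of "{..<d}"] by (metis card_lessThan finite_lessThan)
  finally have cB: "card B \<le> d" .
  have "Fq d g l m = A \<union> B" unfolding Fq_def A_def B_def ..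
  then have "card (Fq d g l m) \<le> card A + card B" using card_Un_le by simp
  then show ?thesis using cA cB by simp
qed


lemma blk_lt: "g < KK n d \<Longrightarrow> x < 4 * 2^d \<Longrightarrow> g * (4 * 2^d) + x < n"
proof -
  assume g: "g < KK n d" and x: "x < 4 * 2^d"
  have "g * (4 * 2^d) + x < Suc g * (4 * 2^d)" using x by simp
  also have "\<dots> \<le> KK n d * (4 * 2^d)" using g by (intro mult_right_mono) auto
  also have "\<dots> \<le> n" unfolding KK_def using div_mult_mod_eq[of n "4*2^d"] by linarith
  finally show ?thesis .
qed

lemma t1_lt: "g < KK n d \<Longrightarrow> a < 2 * 2^d \<Longrightarrow> t1 d g a < n"
  unfolding t1_def by (rule blk_lt) auto
lemma t2_lt: "g < KK n d \<Longrightarrow> a < 2 * 2^d \<Longrightarrow> t2 d g a < n"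
  unfolding t2_def by (rule blk_lt) auto

lemma gof_blk: "g < KK n d \<Longrightarrow> x < 4 * 2^d \<Longrightarrow> gof n d (g * (4 * 2^d) + x) = g"
  unfolding gof_def by simp

lemma gof_t1: "g < KK n d \<Longrightarrow> a < 2 * 2^d \<Longrightarrow> gof n d (t1 d g a) = g"
  unfolding t1_def by (rule gof_blk) auto
lemma gof_t2: "g < KK n d \<Longrightarrow> a < 2 * 2^d \<Longrightarrow> gof n d (t2 d g a) = g"
  unfolding t2_def by (rule gof_blk) auto

lemma gof_lt: "0 < KK n d \<Longrightarrow> gof n d v < KK n d"
  unfolding gof_def by simp

lemma one_lt: "(1::nat) < 2 * 2^d"
proof -
  have "(1::nat) \<le> 2^d" by simp
  then show ?thesis by linarith
qed

section \<open>Non-reachability\<close>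

lemma closure_step:
  assumes g: "g < KK n d" and l: "leaf d l" and m: "leaf d m" and nM: "(g,l,m) \<notin> M"
    and v: "v \<in> {t1 d g a | a. anc l a} \<union> {t2 d g y | y. tnode d y \<and> \<not> anc m y}"
    and e: "(v,w) \<in> GG n d M - Fq d g l m"
  shows "w \<in> {t1 d g a | a. anc l a} \<union> {t2 d g y | y. tnode d y \<and> \<not> anc m y}"
proof -
  let ?R = "{t1 d g a | a. anc l a} \<union> {t2 d g y | y. tnode d y \<and> \<not> anc m y}"
  have vnf: "(v,w) \<notin> Fq d g l m" using e by blast
  have ancT: "\<And>a. anc l a \<Longrightarrow> 1 \<le> a \<and> a < 2*2^d" using anc_tnode[OF l] unfolding tnode_def by blast
  have r1R: "t1 d g 1 \<in> ?R" using anc_root[OF l] by blast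
  have vg: "gof n d v = g"
    using v ancT gof_t1[OF g] gof_t2[OF g] unfolding tnode_def by auto
  have vnr2: "v \<noteq> t2 d h 1" for h
  proof
    assume vh: "v = t2 d h 1"
    from v show False
    proof
      assume "v \<in> {t1 d g a | a. anc l a}"
      then obtain a where "v = t1 d g a" "anc l a" by blast
      then show False using vh ancT[of a] by simp
    next
      assume "v \<in> {t2 d g y | y. tnode d y \<and> \<not> anc m y}"
      then obtain y where "v = t2 d g y" "tnode d y" "\<not> anc m y" by blast
      then show False using vh anc_root[OF m] unfolding tnode_def by (simp add: t2_eq)
    qed
  qed
  have "(v,w) \<in> GG n d M" using e by blast
  then consider
      (T1) h a b where "h < KK n d" "child d a b" "v = t1 d h a" "w = t1 d h b"
    | (T2) h a b where "h < KK n d" "child d a b" "v = t2 d h b" "w = t2 d h a"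
    | (Bk) "w = t1 d (gof n d v) 1"
    | (Fw) h where "v = t2 d h 1"
    | (Md) h l' m' where "(h,l',m') \<in> M" "h < KK n d" "leaf d l'" "leaf d m'" "v = t1 d h l'" "w = t2 d h m'"
    unfolding GG_def base_def mid_def by blast
  then show ?thesis
  proof cases
    case (T1 h a b)
    from v show ?thesis
    proof
      assume "v \<in> {t1 d g a | a. anc l a}"
      then obtain a' where a': "v = t1 d g a'" "anc l a'" by blast
      then have "h = g" "a = a'" using T1 ancT[of a'] child_bounds[of d a b] by (simp_all add: t1_eq)
      then have "anc l b" using vnf T1 a' unfolding Fq_def by blast
      then show ?thesis using T1 \<open>h = g\<close> by blast
    next
      assume "v \<in> {t2 d g y | y. tnode d y \<and> \<not> anc m y}"
      then obtain y where "v = t2 d g y" "tnode d y" by blast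
      then show ?thesis using T1 child_bounds[of d a b] unfolding tnode_def by simp
    qed
  next
    case (T2 h a b)
    from v show ?thesis
    proof
      assume "v \<in> {t1 d g a | a. anc l a}"
      then obtain a' where a': "v = t1 d g a'" "anc l a'" by blast
      then show ?thesis using T2 ancT[of a'] child_bounds[of d a b] by simp
    next
      assume "v \<in> {t2 d g y | y. tnode d y \<and> \<not> anc m y}"
      then obtain y where y: "v = t2 d g y" "tnode d y" "\<not> anc m y" by blast
      then have "h = g" "b = y" using T2 child_bounds[of d a b] unfolding tnode_def by (simp_all add: t2_eq)
      then have "\<not> anc m a" using vnf T2 y unfolding Fq_def by blast
      moreover have "tnode d a" using T2 unfolding child_def by blast
      ultimately show ?thesis using T2 \<open>h = g\<close> by blast
    qed
  next
    case Bk
    then show ?thesis using vg r1R by simp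
  next
    case (Fw h)
    then show ?thesis using vnr2 by blast
  next
    case (Md h l' m')
    from v show ?thesis
    proof
      assume "v \<in> {t1 d g a | a. anc l a}"
      then obtain a' where a': "v = t1 d g a'" "anc l a'" by blast
      then have "h = g" "l' = a'" using Md ancT[of a'] unfolding leaf_def by (simp_all add: t1_eq)
      then have "l' = l" using leaf_anc[OF l] Md a' by blast
      then have "m' \<noteq> m" using Md nM \<open>h = g\<close> by blast
      then have "\<not> anc m m'" using leaf_anc[OF m] Md by metis
      moreover have "tnode d m'" using Md unfolding leaf_def tnode_def by (simp add: Suc_le_eq)
      ultimately show ?thesis using Md \<open>h = g\<close> by blast
    next
      assume "v \<in> {t2 d g y | y. tnode d y \<and> \<not> anc m y}"
      then obtain y where "v = t2 d g y" "tnode d y" by blast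
      then show ?thesis using Md unfolding tnode_def leaf_def by simp
    qed
  qed
qed

lemma no_reach:
  assumes g: "g < KK n d" and l: "leaf d l" and m: "leaf d m" and nM: "(g,l,m) \<notin> M"
  shows "(t1 d g 1, t2 d g 1) \<notin> (GG n d M - Fq d g l m)\<^sup>*"
proof
  let ?R = "{t1 d g a | a. anc l a} \<union> {t2 d g y | y. tnode d y \<and> \<not> anc m y}"
  assume "(t1 d g 1, t2 d g 1) \<in> (GG n d M - Fq d g l m)\<^sup>*"
  then have "t2 d g 1 \<in> ?R"
  proof (induction rule: rtrancl_induct)
    case base then show ?case using anc_root[OF l] by blast
  next
    case (step y z) then show ?case using closure_step[OF g l m nM] by blast
  qed
  then show False
  proof
    assume "t2 d g 1 \<in> {t1 d g a | a. anc l a}"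
    then obtain a where "t2 d g 1 = t1 d g a" "anc l a" by blast
    then show False using anc_tnode[OF l] unfolding tnode_def by (metis t21_neq one_lt)
  next
    assume "t2 d g 1 \<in> {t2 d g y | y. tnode d y \<and> \<not> anc m y}"
    then obtain y where "t2 d g 1 = t2 d g y" "tnode d y" "\<not> anc m y" by blast
    then show False using anc_root[OF m] unfolding tnode_def by (simp add: t2_eq)
  qed
qed


section \<open>Reachability\<close>

lemma path_down:
  assumes l: "leaf d l" and E: "\<And>a b. child d a b \<Longrightarrow> anc l b \<Longrightarrow> (t1 d g a, t1 d g b) \<in> R"
  shows "(t1 d g 1, t1 d g l) \<in> R\<^sup>*"
proof -
  have "j \<le> d \<Longrightarrow> (t1 d g (l div 2^j), t1 d g l) \<in> R\<^sup>*" for j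
  proof (induction j)
    case 0 then show ?case by simp
  next
    case (Suc j)
    have "(t1 d g (l div 2^(Suc j)), t1 d g (l div 2^j)) \<in> R"
      using E anc_step[OF l] anc_div[OF l] Suc.prems by simp
    then show ?case using Suc by (meson converse_rtrancl_into_rtrancl Suc_leD)
  qed
  from this[of d] show ?thesis using leaf_div_d[OF l] by simp
qed

lemma path_up:
  assumes m: "leaf d m" and E: "\<And>a b. child d a b \<Longrightarrow> anc m b \<Longrightarrow> (t2 d g b, t2 d g a) \<in> R"
  shows "(t2 d g m, t2 d g 1) \<in> R\<^sup>*"
proof -
  have "j \<le> d \<Longrightarrow> (t2 d g m, t2 d g (m div 2^j)) \<in> R\<^sup>*" for j
  proof (induction j)
    case 0 then show ?case by simp
  next
    case (Suc j)
    have "(t2 d g (m div 2^j), t2 d g (m div 2^(Suc j))) \<in> R"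
      using E anc_step[OF m] anc_div[OF m] Suc.prems by simp
    then show ?case using Suc by (meson rtrancl_into_rtrancl Suc_leD)
  qed
  from this[of d] show ?thesis using leaf_div_d[OF m] by simp
qed

lemma gadget_conn:
  assumes h: "h < KK n d" and l: "leaf d l" and m: "leaf d m" and hM: "(h,l,m) \<in> M"
    and same: "h = g \<Longrightarrow> l = l0 \<and> m = m0"
  shows "(t1 d h 1, t2 d h 1) \<in> (GG n d M - Fq d g l0 m0)\<^sup>*"
proof -
  let ?R = "GG n d M - Fq d g l0 m0"
  have "(t1 d h 1, t1 d h l) \<in> ?R\<^sup>*"
  proof (rule path_down[OF l])
    fix a b assume ab: "child d a b" "anc l b"
    have "(t1 d h a, t1 d h b) \<in> GG n d M" unfolding GG_def base_def using h ab by blast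
    moreover have "(t1 d h a, t1 d h b) \<notin> Fq d g l0 m0"
    proof
      assume "(t1 d h a, t1 d h b) \<in> Fq d g l0 m0"
      then consider a' b' where "child d a' b'" "\<not> anc l0 b'" "t1 d h a = t1 d g a'" "t1 d h b = t1 d g b'"
        | a' b' where "child d a' b'" "t1 d h a = t2 d g b'" unfolding Fq_def by blast
      then show False
      proof cases
        case 1 then show False using ab same child_bounds[of d a b] child_bounds[of d a' b'] by (simp add: t1_eq)
      next
        case 2 then show False using ab child_bounds[of d a b] child_bounds[of d a' b'] by simp
      qed
    qed
    ultimately show "(t1 d h a, t1 d h b) \<in> ?R" by blast
  qed
  moreover have "(t1 d h l, t2 d h m) \<in> ?R"
  proof -
    have "(t1 d h l, t2 d h m) \<in> GG n d M" unfolding GG_def mid_def using h l m hM by blast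
    moreover have "(t1 d h l, t2 d h m) \<notin> Fq d g l0 m0"
    proof
      assume "(t1 d h l, t2 d h m) \<in> Fq d g l0 m0"
      then consider a' b' where "child d a' b'" "t2 d h m = t1 d g b'"
        | a' b' where "child d a' b'" "t1 d h l = t2 d g b'" unfolding Fq_def by blast
      then show False
      proof cases
        case 1 then show False using l m child_bounds[of d a' b'] unfolding leaf_def by simp
      next
        case 2 then show False using l m child_bounds[of d a' b'] unfolding leaf_def by simp
      qed
    qed
    ultimately show ?thesis by blast
  qed
  moreover have "(t2 d h m, t2 d h 1) \<in> ?R\<^sup>*"
  proof (rule path_up[OF m])
    fix a b assume ab: "child d a b" "anc m b"
    have "(t2 d h b, t2 d h a) \<in> GG n d M" unfolding GG_def base_def using h ab by blast
    moreover have "(t2 d h b, t2 d h a) \<notin> Fq d g l0 m0"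
    proof
      assume "(t2 d h b, t2 d h a) \<in> Fq d g l0 m0"
      then consider a' b' where "child d a' b'" "t2 d h b = t1 d g a'"
        | a' b' where "child d a' b'" "\<not> anc m0 b'" "t2 d h b = t2 d g b'" "t2 d h a = t2 d g a'"
        unfolding Fq_def by blast
      then show False
      proof cases
        case 1 then show False using ab child_bounds[of d a b] child_bounds[of d a' b'] by simp
      next
        case 2 then show False using ab same child_bounds[of d a b] child_bounds[of d a' b'] by (simp add: t2_eq)
      qed
    qed
    ultimately show "(t2 d h b, t2 d h a) \<in> ?R" by blast
  qed
  ultimately show ?thesis by (meson rtrancl_trans rtrancl_into_rtrancl)
qed


lemma leaf_first: "leaf d (2^d)" unfolding leaf_def by simp

lemma strong:
  assumes K: "0 < KK n d" and g: "g < KK n d" and l0: "leaf d l0" and m0: "leaf d m0"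
    and gM: "(g,l0,m0) \<in> M" and S0: "\<And>h. h < KK n d \<Longrightarrow> (h, 2^d, 2^d) \<in> M"
    and u: "u < n" and v: "v < n"
  shows "(u,v) \<in> (GG n d M - Fq d g l0 m0)\<^sup>*"
proof -
  let ?R = "GG n d M - Fq d g l0 m0"
  let ?K = "KK n d"
  have gc: "(t1 d h 1, t2 d h 1) \<in> ?R\<^sup>*" if h: "h < ?K" for h
  proof (cases "h = g")
    case True then show ?thesis using gadget_conn[OF h l0 m0] gM by blast
  next
    case False then show ?thesis using gadget_conn[OF h leaf_first leaf_first S0[OF h]] by blast
  qed
  have ring: "(t2 d h 1, t1 d (Suc h mod ?K) 1) \<in> ?R" if h: "h < ?K" for h
    using h Fq_not_into_r1 unfolding GG_def base_def by blast
  have stp: "(t1 d h 1, t1 d (Suc h mod ?K) 1) \<in> ?R\<^sup>*" if h: "h < ?K" for h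
    using gc[OF h] ring[OF h] by (meson rtrancl_into_rtrancl)
  have fw: "h < ?K \<Longrightarrow> (t1 d 0 1, t1 d h 1) \<in> ?R\<^sup>*" for h
  proof (induction h)
    case 0 then show ?case by simp
  next
    case (Suc h)
    then have "Suc h mod ?K = Suc h" by simp
    then show ?case using Suc stp[of h] by (metis Suc_lessD rtrancl_trans)
  qed
  have bw0: "j < ?K \<Longrightarrow> (t1 d (?K - 1 - j) 1, t1 d 0 1) \<in> ?R\<^sup>*" for j
  proof (induction j)
    case 0
    have "Suc (?K - 1) mod ?K = 0" using K by simp
    then show ?case using stp[of "?K - 1"] K by simp
  next
    case (Suc j)
    have e: "Suc (?K - 1 - Suc j) = ?K - 1 - j" using Suc.prems by simp
    then have "Suc (?K - 1 - Suc j) mod ?K = ?K - 1 - j" using K by simp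
    then have "(t1 d (?K - 1 - Suc j) 1, t1 d (?K - 1 - j) 1) \<in> ?R\<^sup>*"
      using stp[of "?K - 1 - Suc j"] K by simp
    then show ?case using Suc by (metis Suc_lessD rtrancl_trans)
  qed
  have bw: "(t1 d h 1, t1 d 0 1) \<in> ?R\<^sup>*" if h: "h < ?K" for h
    using bw0[of "?K - 1 - h"] h by simp
  have bk: "(w, t1 d (gof n d w) 1) \<in> ?R\<^sup>*" if w: "w < n" for w
  proof (cases "w = t1 d (gof n d w) 1")
    case True then show ?thesis by simp
  next
    case False
    then have "(w, t1 d (gof n d w) 1) \<in> ?R"
      using w Fq_not_into_r1 unfolding GG_def base_def by blast
    then show ?thesis by blast
  qed
  have forw: "(t2 d (gof n d w) 1, w) \<in> ?R\<^sup>*" if w: "w < n" for w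
  proof (cases "w = t2 d (gof n d w) 1")
    case True then show ?thesis by simp
  next
    case False
    then have "(t2 d (gof n d w) 1, w) \<in> ?R"
      using w Fq_not_from_r2 unfolding GG_def base_def by blast
    then show ?thesis by blast
  qed
  have gu: "gof n d u < ?K" "gof n d v < ?K" using gof_lt[OF K] by auto
  show ?thesis
    using bk[OF u] bw[OF gu(1)] fw[OF gu(2)] gc[OF gu(2)] forw[OF v]
    by (meson rtrancl_trans)
qed


lemma GG_edge:
  assumes K: "0 < KK n d" and e: "(u,v) \<in> GG n d M"
  shows "u < n \<and> v < n \<and> u \<noteq> v"
proof -
  have o: "(1::nat) < 2*2^d" by (rule one_lt)
  have gl: "gof n d w < KK n d" for w using gof_lt[OF K] .
  have ml: "Suc h mod KK n d < KK n d" for h using K by simp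
  from e consider
      (T1) h a b where "h < KK n d" "child d a b" "u = t1 d h a" "v = t1 d h b"
    | (T2) h a b where "h < KK n d" "child d a b" "u = t2 d h b" "v = t2 d h a"
    | (Bk) w where "u = w" "v = t1 d (gof n d w) 1" "w < n" "w \<noteq> t1 d (gof n d w) 1"
    | (Fw) w where "v = w" "u = t2 d (gof n d w) 1" "w < n" "w \<noteq> t2 d (gof n d w) 1"
    | (Rg) h where "h < KK n d" "u = t2 d h 1" "v = t1 d (Suc h mod KK n d) 1"
    | (Md) h l' m' x where "x = (h, l', m')" "x \<in> M" "h < KK n d" "leaf d l'" "leaf d m'" "u = t1 d h l'" "v = t2 d h m'"
    using e unfolding GG_def base_def mid_def by blast
  then show "u < n \<and> v < n \<and> u \<noteq> v"
  proof cases
    case (T1 h a b) then show ?thesis using child_bounds[of d a b] t1_lt[of h n d] by (simp add: t1_eq)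
  next
    case (T2 h a b) then show ?thesis using child_bounds[of d a b] t2_lt[of h n d] by (simp add: t2_eq)
  next
    case (Bk w) then show ?thesis using t1_lt[OF gl o] by simp
  next
    case (Fw w) then show ?thesis using t2_lt[OF gl o] by simp
  next
    case (Rg h) then show ?thesis using t2_lt[of h n d] t1_lt[OF ml o] o by simp
  next
    case (Md h l' m' x) then show ?thesis using t1_lt[of h n d] t2_lt[of h n d] unfolding leaf_def by simp
  qed
qed

lemma GG_dig: "0 < KK n d \<Longrightarrow> GG n d M \<in> digraphs n"
  unfolding digraphs_def using GG_edge by blast

lemma sp_fin: "(s,t) \<in> R\<^sup>* \<Longrightarrow> sp_dist R s t < \<infinity>"
proof -
  assume "(s,t) \<in> R\<^sup>*"
  then obtain k where "(s,t) \<in> R ^^ k" using rtrancl_power by blast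
  then have "sp_dist R s t \<le> enat k" unfolding sp_dist_def by (intro INF_lower2[of k]) auto
  then show ?thesis using le_less_trans by fastforce
qed

lemma sp_inf: "(s,t) \<notin> R\<^sup>* \<Longrightarrow> sp_dist R s t = \<infinity>"
proof -
  assume "(s,t) \<notin> R\<^sup>*"
  then have "{k. (s,t) \<in> R ^^ k} = {}" using rtrancl_power by blast
  then show ?thesis unfolding sp_dist_def by (simp add: top_enat_def)
qed

lemma diam_fin: "(\<And>u v. u < n \<Longrightarrow> v < n \<Longrightarrow> (u,v) \<in> R\<^sup>*) \<Longrightarrow> diam n R < \<infinity>"
proof (cases "n = 0")
  case True then show ?thesis by (simp add: diam_def bot_enat_def)
next
  case False
  assume A: "\<And>u v. u < n \<Longrightarrow> v < n \<Longrightarrow> (u,v) \<in> R\<^sup>*"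
  have inner: "(SUP t\<in>{0..<n}. sp_dist R u t) < \<infinity>" if u: "u < n" for u
    by (rule finite_imp_Sup_less[of _ "sp_dist R u 0"]) (use False u A sp_fin in auto)
  show ?thesis unfolding diam_def
    by (rule finite_imp_Sup_less[of _ "SUP t\<in>{0..<n}. sp_dist R 0 t"]) (use False inner in auto)
qed

lemma diam_inf: "u < n \<Longrightarrow> v < n \<Longrightarrow> (u,v) \<notin> R\<^sup>* \<Longrightarrow> diam n R = \<infinity>"
proof -
  assume u: "u < n" and v: "v < n" and nr: "(u,v) \<notin> R\<^sup>*"
  have "sp_dist R u v \<le> (SUP t\<in>{0..<n}. sp_dist R u t)" using v by (intro SUP_upper) auto
  also have "\<dots> \<le> diam n R" unfolding diam_def using u by (intro SUP_upper) auto
  finally show ?thesis using sp_inf[OF nr] by (simp add: top_unique[unfolded top_enat_def])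
qed

lemma sum_pow2_lt: "(\<Sum>i\<le>s. (2::nat)^i) < 2^(Suc s)"
  by (induction s) auto

lemma count_bound:
  fixes phi :: "'a set \<Rightarrow> bool list"
  assumes fin: "finite U" and inj: "inj_on phi (Pow U)" and len: "\<And>S. S \<subseteq> U \<Longrightarrow> length (phi S) \<le> s"
  shows "card U \<le> s"
proof -
  have "(2::nat) ^ card U = card (Pow U)" using fin by (simp add: card_Pow)
  also have "\<dots> = card (phi ` Pow U)" using inj by (simp add: card_image)
  also have "\<dots> \<le> card {xs::bool list. set xs \<subseteq> UNIV \<and> length xs \<le> s}"
    by (rule card_mono) (use finite_lists_length_le[of "UNIV::bool set" s] len in auto)
  also have "\<dots> = (\<Sum>i\<le>s. 2^i)" by (subst card_lists_length_le) auto
  also have "\<dots> < 2^(Suc s)" by (rule sum_pow2_lt)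
  finally have "card U < Suc s" using power_less_imp_less_exp[of 2] by (metis one_less_numeral_iff semiring_norm(76))
  then show ?thesis by simp
qed


lemma main:
  fixes n f s :: nat and enc :: "(nat \<times> nat) set \<Rightarrow> bool list"
    and query :: "bool list \<Rightarrow> (nat \<times> nat) set \<Rightarrow> bool"
  assumes n: "64 \<le> n" and f: "1 \<le> f" and lg: "real (2 * f) \<le> 1 * log 2 (real n)"
    and H1: "\<forall>E \<in> digraphs n. length (enc E) \<le> s"
    and H2: "\<forall>E \<in> digraphs n. \<forall>F. F \<subseteq> E \<and> card F \<le> 2 * f \<longrightarrow>
            query (enc E) F = (diam n (E - F) < \<infinity>)"
  shows "real s \<ge> 1/32 * 2 ^ f * real n"
proof -
  define P :: nat where "P = 2^f"
  have "2 powr real (2*f) \<le> real n" using lg n le_log_iff[of 2 "real n" "real (2*f)"] by simp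
  moreover have "2 powr real (2*f) = real (2^(2*f))" by (subst powr_realpow) auto
  ultimately have "real (2^(2*f)) \<le> real n" by simp
  then have PP: "P * P \<le> n" unfolding P_def by (simp add: power_mult_distrib[symmetric] mult_2 power_add)
  have "(2::nat)^1 \<le> 2^f" using f by (intro power_increasing) auto
  then have P2: "2 \<le> P" unfolding P_def by simp
  have n8: "8 * P \<le> n"
  proof (cases "f \<le> 2")
    case True
    then have "P \<le> 4" unfolding P_def using power_increasing[of f 2 "2::nat"] by simp
    then show ?thesis using n by linarith
  next
    case False
    then have "8 \<le> P" unfolding P_def using power_increasing[of 3 f "2::nat"] by simp
    then have "8 * P \<le> P * P" by simp
    then show ?thesis using PP by linarith
  qed
  define K where "K = KK n f"
  have Kd: "K = n div (4 * P)" unfolding K_def KK_def P_def ..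
  have m4: "n mod (4 * P) < 4 * P" unfolding P_def by simp
  have e4: "n div (4 * P) * (4 * P) + n mod (4 * P) = n" by (rule div_mult_mod_eq)
  have K4: "K * (4 * P) \<le> n" "n < (K + 1) * (4 * P)"
  proof -
    show "K * (4 * P) \<le> n" using e4 unfolding Kd by linarith
    have "(K + 1) * (4 * P) = K * (4 * P) + 4 * P" by (simp add: algebra_simps)
    then show "n < (K + 1) * (4 * P)" using e4 m4 unfolding Kd by linarith
  qed
  have Kpos: "0 < K"
  proof (rule ccontr)
    assume "\<not> 0 < K" then have "K = 0" by simp
    then show False using K4 n8 by simp
  qed
  have nK: "n < 8 * P * K"
  proof -
    have a: "4 * P \<le> K * (4 * P)" using Kpos by simp
    have b: "8 * P * K = 2 * (K * (4 * P))" by simp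
    have c: "(K + 1) * (4 * P) = K * (4 * P) + 4 * P" by (simp add: algebra_simps)
    show ?thesis using a b c K4(2) by linarith
  qed
  define U where "U = {..<K} \<times> {P..<2*P} \<times> {Suc P..<2*P}"
  define S0 where "S0 = {..<K} \<times> {P} \<times> {P}"
  define phi where "phi S = enc (GG n f (S \<union> S0))" for S
  have Kf: "0 < KK n f" using Kpos K_def by simp
  have sub: "S \<subseteq> S'" if S: "S \<subseteq> U" and S': "S' \<subseteq> U" and eq: "phi S = phi S'" for S S'
  proof
    fix x assume xS: "x \<in> S"
    obtain g l m where x: "x = (g,l,m)" by (cases x) auto
    have g: "g < KK n f" and l: "leaf f l" and m: "leaf f m" and mP: "m \<noteq> P"
      using xS S unfolding x U_def K_def leaf_def P_def by auto
    show "x \<in> S'"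
    proof (rule ccontr)
      assume nS': "x \<notin> S'"
      let ?G = "GG n f (S \<union> S0)" and ?G' = "GG n f (S' \<union> S0)" and ?F = "Fq f g l m"
      have FG: "?F \<subseteq> ?G" "?F \<subseteq> ?G'" using Fq_sub[OF g] unfolding GG_def by blast+
      have cF: "card ?F \<le> 2 * f" by (rule Fq_card[OF l m])
      have dG: "?G \<in> digraphs n" "?G' \<in> digraphs n" using GG_dig[OF Kf] by blast+
      have q1: "query (enc ?G) ?F = (diam n (?G - ?F) < \<infinity>)" using H2 dG FG cF by blast
      have q2: "query (enc ?G') ?F = (diam n (?G' - ?F) < \<infinity>)" using H2 dG FG cF by blast
      have S0c: "\<And>h. h < KK n f \<Longrightarrow> (h, 2^f, 2^f) \<in> S \<union> S0" unfolding S0_def K_def P_def by simp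
      have "diam n (?G - ?F) < \<infinity>"
        by (rule diam_fin, rule strong[OF Kf g l m _ S0c]) (use xS x in auto)
      moreover have "diam n (?G' - ?F) = \<infinity>"
      proof (rule diam_inf)
        show "t1 f g 1 < n" "t2 f g 1 < n" using t1_lt[OF g one_lt] t2_lt[OF g one_lt] by auto
        have "(g,l,m) \<notin> S' \<union> S0" using nS' x mP unfolding S0_def by auto
        then show "(t1 f g 1, t2 f g 1) \<notin> (?G' - ?F)\<^sup>*" by (rule no_reach[OF g l m])
      qed
      moreover have "enc ?G = enc ?G'" using eq unfolding phi_def .
      ultimately show False using q1 q2 by simp
    qed
  qed
  have inj: "inj_on phi (Pow U)"
  proof (rule inj_onI)
    fix S S' assume "S \<in> Pow U" "S' \<in> Pow U" "phi S = phi S'"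
    then show "S = S'" using sub[of S S'] sub[of S' S] by simp
  qed
  have len: "length (phi S) \<le> s" if "S \<subseteq> U" for S
    unfolding phi_def using H1 GG_dig[OF Kf] by blast
  have finU: "finite U" unfolding U_def by simp
  have cU: "card U \<le> s" by (rule count_bound[OF finU inj len])
  have cardU: "card U = K * (P * (P - 1))" unfolding U_def by (simp add: card_cartesian_product)
  have "P * n \<le> P * (8 * P * K)" using nK by simp
  also have "\<dots> = (K * P) * (8 * P)" by (simp add: algebra_simps)
  also have "\<dots> \<le> (K * P) * (32 * (P - 1))" using P2 by (intro mult_le_mono2) linarith
  also have "\<dots> = 32 * (K * (P * (P - 1)))" by (simp add: algebra_simps)
  also have "\<dots> \<le> 32 * s" using cU cardU by simp
  finally have "P * n \<le> 32 * s" .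
  then have "real (P * n) \<le> real (32 * s)" by (simp only: of_nat_le_iff)
  then show ?thesis unfolding P_def by simp
qed

theorem lemma10:
  "\<exists>c::real. c > 0 \<and> (\<exists>\<epsilon>::real. \<epsilon> > 0 \<and> (\<exists>n0::nat. \<forall>n \<ge> n0. \<forall>f::nat.
     1 \<le> f \<and> real (2 * f) \<le> \<epsilon> * log 2 (real n) \<longrightarrow>
     (\<forall>(s::nat) (enc :: (nat \<times> nat) set \<Rightarrow> bool list)
        (query :: bool list \<Rightarrow> (nat \<times> nat) set \<Rightarrow> bool).
        (\<forall>E \<in> digraphs n. length (enc E) \<le> s) \<and>
        (\<forall>E \<in> digraphs n. \<forall>F. F \<subseteq> E \<and> card F \<le> 2 * f \<longrightarrow>
            query (enc E) F = (diam n (E - F) < \<infinity>))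
        \<longrightarrow> real s \<ge> c * 2 ^ f * real n)))"
proof (rule exI[of _ "1/32::real"], rule conjI, simp, rule exI[of _ "1::real"], rule conjI, simp,
       rule exI[of _ "64::nat"], intro allI impI)
  fix n f s :: nat and enc :: "(nat \<times> nat) set \<Rightarrow> bool list"
    and query :: "bool list \<Rightarrow> (nat \<times> nat) set \<Rightarrow> bool"
  assume n': "64 \<le> n" and A: "1 \<le> f \<and> real (2 * f) \<le> 1 * log 2 (real n)"
    and B: "(\<forall>E \<in> digraphs n. length (enc E) \<le> s) \<and>
        (\<forall>E \<in> digraphs n. \<forall>F. F \<subseteq> E \<and> card F \<le> 2 * f \<longrightarrow>
            query (enc E) F = (diam n (E - F) < \<infinity>))"
  show "real s \<ge> 1/32 * 2 ^ f * real n"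
    by (rule main[OF n' conjunct1[OF A] conjunct2[OF A] conjunct1[OF B] conjunct2[OF B]])
qed

end
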